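(* There is an absolute constant $K>0$ such that the following holds. Let $\delta\in(0,1/2)$ and let $[\alpha,\alpha+\beta)\subseteq[0,1]$ with $\beta>0$. Then for every integer $k\ge 1$ with $k\le 1/(2\delta)+1$ there exists an online algorithm for the sorting problem with an array of $(1+2k\delta)n$ cells which, on every stream of $n$ reals $r_1,\dots,r_n\in[\alpha,\alpha+\beta)$, places all reals and achieves cost at most $\beta\cdot n^{1/(k+1)}\,\delta^{-K(k+1)}$ (i.e., cost $\beta\cdot n^{1/(k+1)}\delta^{-O(k+1)}$).
   Context: Online sorting with an array of $m$ cells: an array of $m$ initially empty cells ordered left to right; a stream of $n\le m$ reals arrives one at a time and an online algorithm must place each real irrevocably into an empty cell before the next is revealed. Here, for reals from $[\alpha,\alpha+\beta)$, the cost is $\sum_{i=0}^{n}|r_{i+1}-r_i|$ where $r_1,\dots,r_n$ are the reals in left-to-right order in the array and the sentinels are $r_0:=\alpha$, $r_{n+1}:=\alpha+\beta$. *)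

theory Defs
  imports Complex_Main
begin

text \<open>An online algorithm for an array of cells 0,...,m-1: given the list of reals
  already revealed (which, the algorithm being deterministic, determines all its previous
  placements) and the newly revealed real, it returns the cell where the new real is placed.\<close>
type_synonym online_alg = "real list \<Rightarrow> real \<Rightarrow> nat"

definition placement :: "online_alg \<Rightarrow> real list \<Rightarrow> nat \<Rightarrow> nat" where
  "placement A rs i = A (take i rs) (rs ! i)"

definition places_all :: "online_alg \<Rightarrow> nat \<Rightarrow> real list \<Rightarrow> bool" where
  "places_all A m rs \<longleftrightarrow>
     (\<forall>i < length rs. placement A rs i < m) \<and> inj_on (placement A rs) {..<length rs}"

definition array_order :: "online_alg \<Rightarrow> nat \<Rightarrow> real list \<Rightarrow> real list" where
  "array_order A m rs =
     map (\<lambda>c. rs ! (the_inv_into {..<length rs} (placement A rs) c))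
         (filter (\<lambda>c. c \<in> placement A rs ` {..<length rs}) [0..<m])"

fun path_cost :: "real list \<Rightarrow> real" where
  "path_cost (x # y # xs) = \<bar>y - x\<bar> + path_cost (y # xs)"
| "path_cost _ = 0"

definition sort_cost :: "real \<Rightarrow> real \<Rightarrow> online_alg \<Rightarrow> nat \<Rightarrow> real list \<Rightarrow> real" where
  "sort_cost \<alpha> \<beta> A m rs = path_cost (\<alpha> # array_order A m rs @ [\<alpha> + \<beta>])"

end

theory Submission
  imports Defs
begin

lemma pc_split: "path_cost (xs @ c # ys) = path_cost (xs @ [c]) + path_cost (c # ys)"
proof (induction xs)
  case Nil then show ?case by simp
next
  case (Cons x xs) then show ?case by (cases xs) auto
qed

lemma pc_insert: "path_cost (xs @ ys) \<le> path_cost (xs @ c # ys)"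
proof (induction xs)
  case Nil then show ?case by (cases ys) auto
next
  case (Cons x xs)
  show ?case
  proof (cases xs)
    case Nil
    then show ?thesis by (cases ys) auto
  next
    case (Cons x' xs')
    then show ?thesis using Cons.IH by simp
  qed
qed

lemma pc_bound: "xs \<noteq> [] \<Longrightarrow> \<forall>x\<in>set xs. lo \<le> x \<and> x \<le> hi \<Longrightarrow> path_cost xs \<le> (hi - lo) * (real (length xs) - 1)"
proof (induction xs rule: path_cost.induct)
  case (1 x y xs)
  then have "path_cost (y # xs) \<le> (hi - lo) * (real (length (y#xs)) - 1)" by simp
  moreover have "\<bar>y - x\<bar> \<le> hi - lo" using 1(3) by (auto simp: abs_le_iff)
  ultimately show ?case by (simp add: algebra_simps)
next
  case ("2_1") then show ?case by simp
next
  case ("2_2" v) then show ?case by simp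
qed

lemma pc_concat:
  assumes "a \<in> {lo..hi}" "e \<in> {lo..hi}" "\<forall>g\<in>set gs. l g \<in> {lo..hi} \<and> r g \<in> {lo..hi}"
  shows "path_cost (a # concat (map F gs) @ [e])
     \<le> (hi - lo) + (\<Sum>g\<leftarrow>gs. (hi - lo) + path_cost (l g # F g @ [r g]))"
  using assms
proof (induction gs arbitrary: a)
  case Nil then show ?case by auto
next
  case (Cons g gs)
  have "path_cost (a # concat (map F (g#gs)) @ [e]) = path_cost ([a] @ (F g @ concat (map F gs) @ [e]))"
    by simp
  also have "\<dots> \<le> path_cost ([a] @ l g # (F g @ concat (map F gs) @ [e]))"
    by (rule pc_insert)
  also have "\<dots> = path_cost ((a # l g # F g) @ (concat (map F gs) @ [e]))" by simp
  also have "\<dots> \<le> path_cost ((a # l g # F g) @ r g # (concat (map F gs) @ [e]))"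
    by (rule pc_insert)
  also have "\<dots> = path_cost ((a # l g # F g) @ [r g]) + path_cost (r g # concat (map F gs) @ [e])"
    by (subst pc_split) simp
  also have "path_cost ((a # l g # F g) @ [r g]) = \<bar>l g - a\<bar> + path_cost (l g # F g @ [r g])"
    by simp
  also have "\<bar>l g - a\<bar> \<le> hi - lo" using Cons.prems by auto
  also have "path_cost (r g # concat (map F gs) @ [e]) \<le> (hi - lo) + (\<Sum>g\<leftarrow>gs. (hi - lo) + path_cost (l g # F g @ [r g]))"
    using Cons by auto
  finally show ?case by simp
qed

lemma array_order_char:
  assumes pa: "places_all A m rs" and sL: "set L = {..<length rs}"
    and so: "sorted_wrt (\<lambda>i j. placement A rs i < placement A rs j) L"
  shows "array_order A m rs = map (nth rs) L"
proof -
  let ?p = "placement A rs" and ?n = "length rs"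
  have inj: "inj_on ?p {..<?n}" and lt: "\<forall>i<?n. ?p i < m" using pa by (auto simp: places_all_def)
  have s1: "sorted_wrt (<) (map ?p L)" using so by (simp add: sorted_wrt_map)
  have "filter (\<lambda>c. c \<in> ?p ` {..<?n}) [0..<m] = map ?p L"
  proof (rule sorted_distinct_set_unique)
    show "sorted (filter (\<lambda>c. c \<in> ?p ` {..<?n}) [0..<m])" by (simp add: sorted_wrt_filter)
    show "distinct (filter (\<lambda>c. c \<in> ?p ` {..<?n}) [0..<m])" by simp
    show "sorted (map ?p L)" "distinct (map ?p L)" using s1 strict_sorted_iff by blast+
    show "set (filter (\<lambda>c. c \<in> ?p ` {..<?n}) [0..<m]) = set (map ?p L)"
      using lt sL by auto
  qed
  then have "array_order A m rs = map (\<lambda>c. rs ! the_inv_into {..<?n} ?p c) (map ?p L)"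
    by (simp add: array_order_def)
  also have "\<dots> = map (nth rs) L"
    using inj sL by (auto simp: the_inv_into_f_f)
  finally show ?thesis .
qed

lemma order_exists:
  assumes pa: "places_all A m rs"
  shows "\<exists>L. set L = {..<length rs} \<and> sorted_wrt (\<lambda>i j. placement A rs i < placement A rs j) L"
proof -
  let ?p = "placement A rs" and ?n = "length rs"
  have inj: "inj_on ?p {..<?n}" using pa by (auto simp: places_all_def)
  define L where "L = sort_key ?p [0..<?n]"
  have sL: "set L = {..<?n}" by (auto simp: L_def)
  have "sorted (map ?p L)" by (simp add: L_def)
  moreover have "distinct (map ?p L)"
    using inj sL by (simp add: distinct_map L_def atLeast0LessThan)
  ultimately have "sorted_wrt (<) (map ?p L)" using strict_sorted_iff by blast
  then show ?thesis using sL by (auto simp: sorted_wrt_map)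
qed

lemma id_alg:
  assumes "length rs \<le> m"
  shows "places_all (\<lambda>pre x. length pre) m rs \<and> array_order (\<lambda>pre x. length pre) m rs = rs"
proof -
  have pl: "placement (\<lambda>pre x. length pre) rs i = i" if "i < length rs" for i
    using that by (simp add: placement_def)
  have pa: "places_all (\<lambda>pre x. length pre) m rs"
    using assms pl by (auto simp: places_all_def inj_on_def)
  have "array_order (\<lambda>pre x. length pre) m rs = map (nth rs) [0..<length rs]"
    by (rule array_order_char[OF pa]) (auto simp: pl sorted_wrt_iff_nth_less)
  also have "\<dots> = rs" by (simp add: map_nth)
  finally show ?thesis using pa by simp
qed

definition compo :: "(real list \<Rightarrow> nat \<Rightarrow> nat) \<Rightarrow> nat \<Rightarrow> (real \<Rightarrow> online_alg) \<Rightarrow> online_alg" where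
"compo G S B = (\<lambda>pre x. G (pre@[x]) (length pre) * S +
   B x (map (nth (pre@[x])) (filter (\<lambda>i'. G (pre@[x]) i' = G (pre@[x]) (length pre)) [0..<length pre])) x)"

lemma filter_split: "i < n \<Longrightarrow> Q i \<Longrightarrow> filter Q [0..<n] = filter Q [0..<i] @ i # filter Q [Suc i..<n]"
proof -
  assume a: "i < n" "Q i"
  have "[0..<n] = [0..<i] @ i # [Suc i..<n]" using a
    by (metis le0 upt_add_eq_append upt_conv_Cons less_imp_le_nat add_0 le_add_diff_inverse)
  then show ?thesis using a by simp
qed

lemma sorted_wrt_concat_iff:
  "sorted_wrt R (concat xss) \<longleftrightarrow> (\<forall>xs\<in>set xss. sorted_wrt R xs) \<and>
     sorted_wrt (\<lambda>xs ys. \<forall>x\<in>set xs. \<forall>y\<in>set ys. R x y) xss"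
  by (induction xss) (auto simp: sorted_wrt_append)

lemma comp_placement:
  assumes stab: "\<forall>i'\<le>i. G (take (Suc i) rs) i' = G rs i'" and i: "i < length rs"
  defines "P \<equiv> filter (\<lambda>i'. G rs i' = G rs i) [0..<length rs]"
  defines "t \<equiv> length (filter (\<lambda>i'. G rs i' = G rs i) [0..<i])"
  shows "t < length P \<and> P ! t = i \<and>
    placement (compo G S B) rs i = G rs i * S + placement (B (rs!i)) (map (nth rs) P) t"
proof -
  have Ps: "P = filter (\<lambda>i'. G rs i' = G rs i) [0..<i] @ i # filter (\<lambda>i'. G rs i' = G rs i) [Suc i..<length rs]"
    unfolding P_def by (rule filter_split[OF i]) simp
  have t1: "t < length P" "P ! t = i" "take t P = filter (\<lambda>i'. G rs i' = G rs i) [0..<i]"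
    using Ps by (simp_all add: t_def nth_append)
  have tk: "take i rs @ [rs ! i] = take (Suc i) rs" using i by (simp add: take_Suc_conv_app_nth)
  have f: "filter (\<lambda>i'. G (take (Suc i) rs) i' = G (take (Suc i) rs) i) [0..<i]
        = filter (\<lambda>i'. G rs i' = G rs i) [0..<i]"
    using stab by (intro filter_cong) auto
  have m: "map (nth (take (Suc i) rs)) (filter (\<lambda>i'. G rs i' = G rs i) [0..<i])
      = map (nth rs) (filter (\<lambda>i'. G rs i' = G rs i) [0..<i])"
    by (rule map_cong) auto
  have "placement (compo G S B) rs i = G rs i * S + B (rs!i) (map (nth (take (Suc i) rs)) (filter (\<lambda>i'. G rs i' = G rs i) [0..<i])) (rs ! i)"
    unfolding placement_def compo_def using i tk f t1 stab by simp
  also note m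
  also note t1(3)[symmetric]
  also have "map (nth rs) (take t P) = take t (map (nth rs) P)" by (simp add: take_map)
  also have "rs ! i = map (nth rs) P ! t" using t1 by simp
  finally show ?thesis using t1 by (simp add: placement_def)
qed

lemma comp_main:
  fixes rs :: "real list" and G S B BB M
  defines "n \<equiv> length rs"
  defines "P \<equiv> \<lambda>\<gamma>. filter (\<lambda>i. G rs i = \<gamma>) [0..<n]"
  defines "sub \<equiv> \<lambda>\<gamma>. map (nth rs) (P \<gamma>)"
  assumes stab: "\<forall>i<n. \<forall>i'\<le>i. G (take (Suc i) rs) i' = G rs i'"
    and S: "0 < S"
    and BB: "\<forall>i<n. B (rs!i) = BB (G rs i)"
    and sp: "\<forall>\<gamma>\<in>G rs ` {..<n}. places_all (BB \<gamma>) S (sub \<gamma>)"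
    and bd: "\<forall>i<n. (G rs i + 1) * S \<le> M"
  shows "places_all (compo G S B) M rs \<and>
    array_order (compo G S B) M rs
      = concat (map (\<lambda>\<gamma>. array_order (BB \<gamma>) S (sub \<gamma>)) (sorted_list_of_set (G rs ` {..<n})))"
proof -
  let ?p = "placement (compo G S B) rs"
  define t where "t = (\<lambda>i. length (filter (\<lambda>i'. G rs i' = G rs i) [0..<i]))"
  define q where "q = (\<lambda>i. placement (BB (G rs i)) (sub (G rs i)) (t i))"
  have cp: "t i < length (P (G rs i)) \<and> P (G rs i) ! t i = i \<and> ?p i = G rs i * S + q i" if "i < n" for i
    using comp_placement[of i G rs S B] stab that BB unfolding q_def t_def P_def sub_def n_def
    by auto
  have qS: "q i < S" if "i < n" for i
  proof -
    have "places_all (BB (G rs i)) S (sub (G rs i))" using sp that by auto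
    moreover have "t i < length (sub (G rs i))" using cp[OF that] by (simp add: sub_def)
    ultimately show ?thesis unfolding q_def places_all_def by auto
  qed
  have pdiv: "?p i div S = G rs i" "?p i mod S = q i" if "i < n" for i
    using cp[OF that] qS[OF that] S by auto
  have inj: "inj_on ?p {..<n}"
  proof (rule inj_onI)
    fix i j assume ij: "i \<in> {..<n}" "j \<in> {..<n}" "?p i = ?p j"
    then have g: "G rs i = G rs j" and qq: "q i = q j" using pdiv by (metis lessThan_iff)+
    have "places_all (BB (G rs i)) S (sub (G rs i))" using sp ij by auto
    then have "inj_on (placement (BB (G rs i)) (sub (G rs i))) {..<length (sub (G rs i))}"
      by (simp add: places_all_def)
    moreover have "t i < length (sub (G rs i))" "t j < length (sub (G rs i))"
      using cp ij g unfolding sub_def by (metis lessThan_iff length_map)+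
    ultimately have "t i = t j" using qq g unfolding q_def by (auto dest: inj_onD)
    then show "i = j" using cp ij g by (metis lessThan_iff)
  qed
  have lt: "\<forall>i<n. ?p i < M"
  proof (intro allI impI)
    fix i assume i: "i < n"
    have "?p i < G rs i * S + S" using cp[OF i] qS[OF i] by simp
    also have "\<dots> \<le> M" using bd i by (simp add: algebra_simps)
    finally show "?p i < M" .
  qed
  have pa: "places_all (compo G S B) M rs" using inj lt by (simp add: places_all_def n_def)
  define \<Gamma> where "\<Gamma> = G rs ` {..<n}"
  have fin: "finite \<Gamma>" by (simp add: \<Gamma>_def)
  have "\<forall>\<gamma>\<in>\<Gamma>. \<exists>L. set L = {..<length (sub \<gamma>)} \<and>
      sorted_wrt (\<lambda>i j. placement (BB \<gamma>) (sub \<gamma>) i < placement (BB \<gamma>) (sub \<gamma>) j) L"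
    using sp order_exists unfolding \<Gamma>_def by blast
  then obtain LL where LL: "\<And>\<gamma>. \<gamma>\<in>\<Gamma> \<Longrightarrow> set (LL \<gamma>) = {..<length (sub \<gamma>)} \<and>
      sorted_wrt (\<lambda>i j. placement (BB \<gamma>) (sub \<gamma>) i < placement (BB \<gamma>) (sub \<gamma>) j) (LL \<gamma>)"
    by metis
  define L where "L = concat (map (\<lambda>\<gamma>. map (nth (P \<gamma>)) (LL \<gamma>)) (sorted_list_of_set \<Gamma>))"
  have memP: "i \<in> set (P \<gamma>) \<longleftrightarrow> i < n \<and> G rs i = \<gamma>" for i \<gamma> by (auto simp: P_def)
  have pP: "?p (P \<gamma> ! u) = \<gamma> * S + placement (BB \<gamma>) (sub \<gamma>) u"
    if "\<gamma> \<in> \<Gamma>" "u < length (P \<gamma>)" for \<gamma> u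
  proof -
    let ?i = "P \<gamma> ! u"
    have i: "?i < n" "G rs ?i = \<gamma>" using memP nth_mem[OF that(2)] by blast+
    have "P \<gamma> ! t ?i = ?i" "t ?i < length (P \<gamma>)" using cp[OF i(1)] i by auto
    moreover have "distinct (P \<gamma>)" by (simp add: P_def)
    ultimately have "t ?i = u" using that(2) nth_eq_iff_index_eq by blast
    then show ?thesis using cp[OF i(1)] i unfolding q_def by simp
  qed
  have setL: "set L = {..<n}"
  proof -
    have "set L = (\<Union>\<gamma>\<in>\<Gamma>. nth (P \<gamma>) ` set (LL \<gamma>))" using fin by (simp add: L_def)
    also have "\<dots> = (\<Union>\<gamma>\<in>\<Gamma>. set (P \<gamma>))"
      using LL by (intro SUP_cong refl) (auto simp: sub_def set_conv_nth)
    also have "\<dots> = {..<n}" using memP unfolding \<Gamma>_def by auto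
    finally show ?thesis .
  qed
  have sortL: "sorted_wrt (\<lambda>i j. ?p i < ?p j) L"
    unfolding L_def sorted_wrt_concat_iff
  proof (intro conjI)
    show "\<forall>xs\<in>set (map (\<lambda>\<gamma>. map ((!) (P \<gamma>)) (LL \<gamma>)) (sorted_list_of_set \<Gamma>)). sorted_wrt (\<lambda>i j. ?p i < ?p j) xs"
    proof
      fix xs assume "xs \<in> set (map (\<lambda>\<gamma>. map ((!) (P \<gamma>)) (LL \<gamma>)) (sorted_list_of_set \<Gamma>))"
      then obtain \<gamma> where g: "\<gamma> \<in> \<Gamma>" "xs = map ((!) (P \<gamma>)) (LL \<gamma>)" using fin by auto
      have "sorted_wrt (\<lambda>u v. ?p (P \<gamma> ! u) < ?p (P \<gamma> ! v)) (LL \<gamma>)"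
        using LL[OF g(1)] 
        by (rule_tac sorted_wrt_mono_rel[of _ "(\<lambda>i j. placement (BB \<gamma>) (sub \<gamma>) i < placement (BB \<gamma>) (sub \<gamma>) j)"])
           (auto simp: pP[OF g(1)] sub_def)
      then show "sorted_wrt (\<lambda>i j. ?p i < ?p j) xs" using g by (simp add: sorted_wrt_map)
    qed
    have blk: "?p x < ?p y" if "x \<in> set (P \<gamma>)" "y \<in> set (P \<gamma>')" "\<gamma> < \<gamma>'" for x y \<gamma> \<gamma>'
    proof -
      have x: "x < n" "G rs x = \<gamma>" and y: "y < n" "G rs y = \<gamma>'" using that memP by auto
      have "?p x < \<gamma> * S + S" using cp[OF x(1)] qS[OF x(1)] x by simp
      also have "\<dots> = (\<gamma> + 1) * S" by simp
      also have "\<dots> \<le> \<gamma>' * S" using that(3) by (intro mult_right_mono) auto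
      also have "\<dots> \<le> ?p y" using cp[OF y(1)] y by simp
      finally show ?thesis .
    qed
    have "sorted_wrt (<) (sorted_list_of_set \<Gamma>)" by simp
    then show "sorted_wrt (\<lambda>xs ys. \<forall>x\<in>set xs. \<forall>y\<in>set ys. ?p x < ?p y)
        (map (\<lambda>\<gamma>. map ((!) (P \<gamma>)) (LL \<gamma>)) (sorted_list_of_set \<Gamma>))"
      unfolding sorted_wrt_map
    proof (rule sorted_wrt_mono_rel[rotated])
      fix \<gamma> \<gamma>' assume a: "\<gamma> \<in> set (sorted_list_of_set \<Gamma>)" "\<gamma>' \<in> set (sorted_list_of_set \<Gamma>)" "\<gamma> < \<gamma>'"
      then have g: "\<gamma> \<in> \<Gamma>" "\<gamma>' \<in> \<Gamma>" using fin by auto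
      show "\<forall>x\<in>set (map ((!) (P \<gamma>)) (LL \<gamma>)). \<forall>y\<in>set (map ((!) (P \<gamma>')) (LL \<gamma>')). ?p x < ?p y"
      proof (intro ballI)
        fix x y assume "x \<in> set (map ((!) (P \<gamma>)) (LL \<gamma>))" "y \<in> set (map ((!) (P \<gamma>')) (LL \<gamma>'))"
        then have "x \<in> set (P \<gamma>)" "y \<in> set (P \<gamma>')" using LL[OF g(1)] LL[OF g(2)] by (auto simp: sub_def)
        then show "?p x < ?p y" using blk a(3) by blast
      qed
    qed
  qed
  have "array_order (compo G S B) M rs = map (nth rs) L"
    using array_order_char[OF pa _ sortL] setL by (simp add: n_def)
  also have "\<dots> = concat (map (\<lambda>\<gamma>. array_order (BB \<gamma>) S (sub \<gamma>)) (sorted_list_of_set \<Gamma>))"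
    unfolding L_def map_concat map_map
  proof (rule arg_cong[where f=concat], rule map_cong[OF refl], unfold comp_apply)
    fix \<gamma> assume "\<gamma> \<in> set (sorted_list_of_set \<Gamma>)"
    then have g: "\<gamma> \<in> \<Gamma>" using fin by simp
    have "array_order (BB \<gamma>) S (sub \<gamma>) = map (nth (sub \<gamma>)) (LL \<gamma>)"
      using array_order_char[of "BB \<gamma>" S "sub \<gamma>" "LL \<gamma>"] LL[OF g] sp g unfolding \<Gamma>_def by blast
    also have "\<dots> = map (nth rs) (map (nth (P \<gamma>)) (LL \<gamma>))"
      using LL[OF g] by (auto simp: sub_def)
    finally show "map (nth rs) (map (nth (P \<gamma>)) (LL \<gamma>)) = array_order (BB \<gamma>) S (sub \<gamma>)" by simp
  qed
  finally show ?thesis using pa by (simp add: \<Gamma>_def)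
qed

definition cntf :: "(real \<Rightarrow> nat) \<Rightarrow> real list \<Rightarrow> nat \<Rightarrow> nat" where
  "cntf f xs i = length (filter (\<lambda>y. f y = f (xs!i)) (take i xs))"
definition keyf :: "(real \<Rightarrow> nat) \<Rightarrow> nat \<Rightarrow> real list \<Rightarrow> nat \<Rightarrow> nat \<times> nat" where
  "keyf f s xs i = (f (xs!i), cntf f xs i div s)"
definition gidf :: "(real \<Rightarrow> nat) \<Rightarrow> nat \<Rightarrow> real list \<Rightarrow> nat \<Rightarrow> nat" where
  "gidf f s xs i = card (keyf f s xs ` {..< (LEAST i'. keyf f s xs i' = keyf f s xs i)})"

lemma least_cong_le: "P (a::nat) \<Longrightarrow> (\<forall>x\<le>a. P x = Q x) \<Longrightarrow> Least P = Least Q"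
proof -
  assume a: "P a" "\<forall>x\<le>a. P x = Q x"
  have l1: "Least P \<le> a" using a by (simp add: Least_le)
  have "Q a" using a by auto
  then have l2: "Least Q \<le> a" by (simp add: Least_le)
  have "P (Least P)" using a(1) by (rule LeastI)
  then have "Q (Least P)" using a l1 by auto
  then have "Least Q \<le> Least P" by (rule Least_le)
  moreover have "Q (Least Q)" using \<open>Q a\<close> by (rule LeastI)
  then have "P (Least Q)" using a l2 by auto
  then have "Least P \<le> Least Q" by (rule Least_le)
  ultimately show ?thesis by simp
qed

lemma keyf_take: "i' < j \<Longrightarrow> keyf f s (take j xs) i' = keyf f s xs i'"
  by (simp add: keyf_def cntf_def min_def)

lemma gidf_stab: "i' \<le> i \<Longrightarrow> gidf f s (take (Suc i) xs) i' = gidf f s xs i'"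
proof -
  assume a: "i' \<le> i"
  let ?k = "keyf f s xs" and ?k' = "keyf f s (take (Suc i) xs)"
  have kk: "\<forall>x\<le>i'. ?k' x = ?k x" using a keyf_take by auto
  have L: "(LEAST x. ?k' x = ?k' i') = (LEAST x. ?k x = ?k i')"
    by (rule least_cong_le[where a=i']) (use kk in auto)
  have "(LEAST x. ?k x = ?k i') \<le> i'" by (simp add: Least_le)
  then have "?k' ` {..<(LEAST x. ?k x = ?k i')} = ?k ` {..<(LEAST x. ?k x = ?k i')}"
    using kk by (intro image_cong) auto
  then show ?thesis unfolding gidf_def L by simp
qed

lemma gidf_key_eq:
  assumes "gidf f s xs i = gidf f s xs i'"
  shows "keyf f s xs i = keyf f s xs i'"
proof (rule ccontr)
  assume ne: "keyf f s xs i \<noteq> keyf f s xs i'"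
  let ?k = "keyf f s xs"
  define F where "F = (LEAST x. ?k x = ?k i)"
  define F' where "F' = (LEAST x. ?k x = ?k i')"
  have kF: "?k F = ?k i" unfolding F_def by (rule LeastI) simp
  have kF': "?k F' = ?k i'" unfolding F'_def by (rule LeastI) simp
  have nF: "?k F \<notin> ?k ` {..<F}"
  proof
    assume "?k F \<in> ?k ` {..<F}"
    then obtain x where "x < F" "?k x = ?k i" using kF by auto
    then show False unfolding F_def using not_less_Least by blast
  qed
  have nF': "?k F' \<notin> ?k ` {..<F'}"
  proof
    assume "?k F' \<in> ?k ` {..<F'}"
    then obtain x where "x < F'" "?k x = ?k i'" using kF' by auto
    then show False unfolding F'_def using not_less_Least by blast
  qed
  have "F \<noteq> F'" using ne kF kF' by auto
  have lt: "card (?k ` {..<a}) < card (?k ` {..<a'})" if "a < a'" "?k a \<notin> ?k ` {..<a}" for a a'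
  proof (rule psubset_card_mono)
    show "finite (?k ` {..<a'})" by simp
    show "?k ` {..<a} \<subset> ?k ` {..<a'}" using that by auto
  qed
  have "gidf f s xs i = card (?k ` {..<F})" "gidf f s xs i' = card (?k ` {..<F'})"
    unfolding gidf_def F_def F'_def by simp_all
  then show False using assms \<open>F \<noteq> F'\<close> lt[of F F'] lt[of F' F] nF nF'
    by (cases "F < F'") auto
qed

lemma gidf_lt:
  assumes "i < n"
  shows "gidf f s xs i < card (keyf f s xs ` {..<n})"
proof -
  let ?k = "keyf f s xs"
  define F where "F = (LEAST x. ?k x = ?k i)"
  have "F \<le> i" unfolding F_def by (simp add: Least_le)
  have kF: "?k F = ?k i" unfolding F_def by (rule LeastI) simp
  have nF: "?k F \<notin> ?k ` {..<F}"
  proof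
    assume "?k F \<in> ?k ` {..<F}"
    then obtain x where "x < F" "?k x = ?k i" using kF by auto
    then show False unfolding F_def using not_less_Least by blast
  qed
  have "?k ` {..<F} \<subset> ?k ` {..<n}" using nF \<open>F \<le> i\<close> assms by auto
  then have "card (?k ` {..<F}) < card (?k ` {..<n})" by (rule psubset_card_mono[rotated]) simp
  then show ?thesis unfolding gidf_def F_def by simp
qed

lemma gidf_image_card:
  "card (gidf f s xs ` {..<n}) \<le> card (keyf f s xs ` {..<n})"
proof -
  let ?k = "keyf f s xs"
  have "gidf f s xs ` {..<n} = (\<lambda>\<kappa>. card (?k ` {..< (LEAST i'. ?k i' = \<kappa>)})) ` (?k ` {..<n})"
    unfolding gidf_def by (simp add: image_image)
  then show ?thesis by (simp add: card_image_le)
qed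

lemma cntf_mono:
  assumes "i < i'" "i' \<le> length xs" "f (xs!i) = f (xs!i')"
  shows "cntf f xs i < cntf f xs i'"
proof -
  have t1: "take (Suc i) (take i' xs) = take (Suc i) xs" using assms by (simp add: min_def)
  have "take i' xs = take (Suc i) (take i' xs) @ drop (Suc i) (take i' xs)" by (rule append_take_drop_id[symmetric])
  also have "\<dots> = take i xs @ [xs!i] @ drop (Suc i) (take i' xs)"
    using t1 assms by (simp add: take_Suc_conv_app_nth)
  finally have e: "take i' xs = take i xs @ [xs!i] @ drop (Suc i) (take i' xs)" .
  have "cntf f xs i' = length (filter (\<lambda>y. f y = f (xs!i)) (take i' xs))"
    unfolding cntf_def using assms(3) by simp
  also have "\<dots> = cntf f xs i + 1 + length (filter (\<lambda>y. f y = f (xs!i)) (drop (Suc i) (take i' xs)))"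
    by (subst e) (simp add: cntf_def)
  finally show ?thesis by simp
qed

lemma cntf_lt:
  assumes "i < length xs"
  shows "cntf f xs i < length (filter (\<lambda>y. f y = f (xs!i)) xs)"
proof -
  have "xs = take i xs @ xs!i # drop (Suc i) xs" using assms by (simp add: id_take_nth_drop)
  then have "length (filter (\<lambda>y. f y = f (xs!i)) xs) = length (filter (\<lambda>y. f y = f (xs!i)) (take i xs @ xs!i # drop (Suc i) xs))"
    by (rule arg_cong)
  then have "length (filter (\<lambda>y. f y = f (xs!i)) xs) = cntf f xs i + 1 + length (filter (\<lambda>y. f y = f (xs!i)) (drop (Suc i) xs))"
    unfolding cntf_def by simp
  then show ?thesis by simp
qed

lemma real_div_le: "0 < s \<Longrightarrow> real (n div s) \<le> real n / real s"
proof -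
  assume s: "0 < s"
  have "n div s * s \<le> n" by (metis div_mult_mod_eq le_add1)
  then have "real (n div s) * real s \<le> real n" by (metis of_nat_le_iff of_nat_mult)
  then show ?thesis using s by (simp add: pos_le_divide_eq)
qed

lemma len_partition: fixes f :: "'a \<Rightarrow> nat" shows "\<forall>y\<in>set xs. f y < b \<Longrightarrow> length xs = (\<Sum>j<b. length (filter (\<lambda>y. f y = j) xs))"
proof (induction xs)
  case Nil then show ?case by simp
next
  case (Cons x xs)
  have "(\<Sum>j<b. length (filter (\<lambda>y. f y = j) (x#xs)))
      = (\<Sum>j<b. (if f x = j then 1 else 0) + length (filter (\<lambda>y. f y = j) xs))"
    by (intro sum.cong) auto
  also have "\<dots> = (\<Sum>j<b. (if f x = j then 1 else 0)) + (\<Sum>j<b. length (filter (\<lambda>y. f y = j) xs))"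
    by (rule sum.distrib)
  also have "(\<Sum>j<b. (if f x = j then 1 else 0::nat)) = 1"
  proof -
    have "(\<Sum>j<b. (if f x = j then 1 else 0::nat)) = (\<Sum>j\<in>{..<b}. (if j = f x then 1 else 0))"
      by (intro sum.cong) auto
    also have "\<dots> = 1" using Cons.prems by (subst sum.delta) (auto simp: finite_lessThan)
    finally show ?thesis .
  qed
  finally show ?case using Cons by simp
qed

lemma card_keys:
  assumes s: "0 < s" and fb: "\<forall>y\<in>set xs. f y < b"
  shows "real (card (keyf f s xs ` {..<length xs})) \<le> real (length xs) / real s + real b"
proof -
  define N where "N = (\<lambda>j. length (filter (\<lambda>y. f y = j) xs))"
  have sub: "keyf f s xs ` {..<length xs} \<subseteq> (\<Union>j\<in>{..<b}. {j} \<times> {..< N j div s + 1})"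
  proof
    fix k assume "k \<in> keyf f s xs ` {..<length xs}"
    then obtain i where i: "i < length xs" "k = keyf f s xs i" by auto
    have "f (xs!i) < b" using fb i nth_mem by blast
    moreover have "cntf f xs i < N (f (xs!i))" using cntf_lt[OF i(1)] by (simp add: N_def)
    then have "cntf f xs i div s \<le> N (f (xs!i)) div s" by (simp add: div_le_mono)
    ultimately show "k \<in> (\<Union>j\<in>{..<b}. {j} \<times> {..< N j div s + 1})"
      using i by (auto simp: keyf_def)
  qed
  have "card (keyf f s xs ` {..<length xs}) \<le> card (\<Union>j\<in>{..<b}. {j} \<times> {..< N j div s + 1})"
    by (rule card_mono[OF _ sub]) auto
  also have "\<dots> \<le> (\<Sum>j<b. card ({j} \<times> {..< N j div s + 1}))" by (rule card_UN_le) simp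
  also have "\<dots> = (\<Sum>j<b. N j div s + 1)" by (simp add: card_cartesian_product)
  finally have c0: "card (keyf f s xs ` {..<length xs}) \<le> (\<Sum>j<b. N j div s + 1)" .
  have "real (\<Sum>j<b. N j div s + 1) = (\<Sum>j<b. real (N j div s) + 1)" by (simp add: add.commute)
  then have "real (card (keyf f s xs ` {..<length xs})) \<le> (\<Sum>j<b. real (N j div s) + 1)"
    using c0 by (metis of_nat_le_iff)
  also have "\<dots> \<le> (\<Sum>j<b. real (N j) / real s + 1)"
    by (intro sum_mono) (simp add: real_div_le s)
  also have "\<dots> = (\<Sum>j<b. real (N j)) / real s + real b"
    by (simp add: sum.distrib sum_divide_distrib)
  also have "(\<Sum>j<b. real (N j)) = real (length xs)"
    using len_partition[OF fb] by (simp add: N_def)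
  finally show ?thesis .
qed

lemma block_size:
  assumes s: "0 < s"
  shows "card {i. i < length xs \<and> gidf f s xs i = \<gamma>} \<le> s"
proof (cases "{i. i < length xs \<and> gidf f s xs i = \<gamma>} = {}")
  case True then show ?thesis by (simp only: True card.empty)
next
  case False
  then obtain i0 where i0: "i0 < length xs" "gidf f s xs i0 = \<gamma>" by auto
  obtain j c where jc: "keyf f s xs i0 = (j, c)" by (meson surj_pair)
  define A where "A = {i. i < length xs \<and> keyf f s xs i = (j, c)}"
  have sub: "{i. i < length xs \<and> gidf f s xs i = \<gamma>} \<subseteq> A"
  proof
    fix i assume "i \<in> {i. i < length xs \<and> gidf f s xs i = \<gamma>}"
    then have i: "i < length xs" "gidf f s xs i = gidf f s xs i0" using i0 by auto
    have "keyf f s xs i = keyf f s xs i0" using i(2) by (rule gidf_key_eq)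
    then show "i \<in> A" using i(1) jc by (simp add: A_def)
  qed
  have inj: "inj_on (cntf f xs) A"
  proof (rule inj_onI)
    fix x y assume xy: "x \<in> A" "y \<in> A" "cntf f xs x = cntf f xs y"
    have fe: "f (xs!x) = f (xs!y)" using xy by (auto simp: A_def keyf_def)
    show "x = y"
    proof (rule ccontr)
      assume "x \<noteq> y"
      then consider "x < y" | "y < x" by linarith
      then show False
      proof cases
        case 1 then show False using cntf_mono[of x y xs f] xy fe by (auto simp: A_def)
      next
        case 2 then show False using cntf_mono[of y x xs f] xy fe by (auto simp: A_def)
      qed
    qed
  qed
  have img: "cntf f xs ` A \<subseteq> {c*s..<c*s+s}"
  proof
    fix z assume "z \<in> cntf f xs ` A"
    then obtain i where "i \<in> A" "z = cntf f xs i" by auto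
    then have d: "z div s = c" by (auto simp: A_def keyf_def)
    have e: "c * s + z mod s = z" using d div_mult_mod_eq[of z s] by (simp add: mult.commute)
    moreover have "z mod s < s" using s by simp
    ultimately show "z \<in> {c*s..<c*s+s}" by (simp only: atLeastLessThan_iff) linarith
  qed
  have "card A = card (cntf f xs ` A)" using inj by (simp add: card_image)
  also have "\<dots> \<le> card {c*s..<c*s+s}" by (rule card_mono[OF _ img]) simp
  also have "\<dots> = s" by simp
  finally have "card A \<le> s" .
  moreover have "card {i. i < length xs \<and> gidf f s xs i = \<gamma>} \<le> card A"
    by (rule card_mono[OF _ sub]) (simp add: A_def)
  ultimately show ?thesis by simp
qed

lemma id_cost:
  assumes "length rs \<le> m" "set rs \<subseteq> {lo..<lo+w}" "0 < w"
  shows "places_all (\<lambda>pre x. length pre) m rs \<and>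
    sort_cost lo w (\<lambda>pre x. length pre) m rs \<le> w * (real (length rs) + 1)"
proof -
  have h: "places_all (\<lambda>pre x. length pre) m rs \<and> array_order (\<lambda>pre x. length pre) m rs = rs"
    using id_alg assms(1) by blast
  have "path_cost (lo # rs @ [lo + w]) \<le> ((lo + w) - lo) * (real (length (lo # rs @ [lo + w])) - 1)"
    by (rule pc_bound) (use assms in auto)
  then show ?thesis using h by (simp add: sort_cost_def algebra_simps)
qed

lemma root_pow: "0 \<le> (x::real) \<Longrightarrow> (x powr (1 / real (Suc m))) ^ Suc m = x"
proof -
  assume x: "0 \<le> x"
  show ?thesis
  proof (cases "x = 0")
    case True then show ?thesis by simp
  next
    case False
    then have "0 < x" using x by simp
    then have "(x powr (1 / real (Suc m))) ^ Suc m = (x powr (1 / real (Suc m))) powr real (Suc m)"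
      by (intro powr_realpow[symmetric]) simp
    also have "\<dots> = x" using \<open>0 < x\<close> by (simp add: powr_powr)
    finally show ?thesis .
  qed
qed

definition cells :: "real \<Rightarrow> nat \<Rightarrow> nat \<Rightarrow> nat" where
  "cells \<delta> k n = nat \<lfloor>(1 + 2 * real k * \<delta>) * real n\<rfloor>"
definition bpar :: "real \<Rightarrow> nat \<Rightarrow> nat \<Rightarrow> nat" where
  "bpar \<delta> k n = nat \<lfloor>(\<delta> * real n) powr (1 / real (Suc (Suc k)))\<rfloor>"
definition spar :: "real \<Rightarrow> nat \<Rightarrow> nat \<Rightarrow> nat" where
  "spar \<delta> k n = nat \<lfloor>\<delta> * real n / real (bpar \<delta> k n)\<rfloor>"
definition bkt :: "real \<Rightarrow> real \<Rightarrow> nat \<Rightarrow> real \<Rightarrow> nat" where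
  "bkt lo w b x = nat \<lfloor>(x - lo) * real b / w\<rfloor>"

fun alg :: "real \<Rightarrow> nat \<Rightarrow> nat \<Rightarrow> real \<Rightarrow> real \<Rightarrow> online_alg" where
  "alg \<delta> 0 n lo w = (\<lambda>pre x. length pre)"
| "alg \<delta> (Suc k) n lo w = (if \<delta> * real n < 1 then (\<lambda>pre x. length pre) else
    compo (gidf (bkt lo w (bpar \<delta> k n)) (spar \<delta> k n)) (cells \<delta> k (spar \<delta> k n))
      (\<lambda>x. alg \<delta> k (spar \<delta> k n) (lo + real (bkt lo w (bpar \<delta> k n) x) * w / real (bpar \<delta> k n))
         (w / real (bpar \<delta> k n))))"

lemma cells_ge: "0 \<le> \<delta> \<Longrightarrow> n \<le> cells \<delta> k n"
proof -
  assume d: "0 \<le> \<delta>"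
  have "real n \<le> (1 + 2 * real k * \<delta>) * real n" using d by (simp add: algebra_simps)
  then have "int n \<le> \<lfloor>(1 + 2 * real k * \<delta>) * real n\<rfloor>" by (simp add: le_floor_iff)
  then show ?thesis unfolding cells_def by linarith
qed

lemma bkt_props:
  assumes "x \<in> {lo..<lo+w}" "0 < w" "0 < b"
  shows "bkt lo w b x < b \<and> lo + real (bkt lo w b x) * w / real b \<le> x \<and>
     x < lo + real (bkt lo w b x) * w / real b + w / real b"
proof -
  define z where "z = (x - lo) * real b / w"
  have z0: "0 \<le> z" using assms by (simp add: z_def)
  have "(x - lo) * real b < w * real b" using assms by (intro mult_strict_right_mono) auto
  then have zb: "z < real b" using assms by (simp add: z_def pos_divide_less_eq)
  have j: "real (bkt lo w b x) = of_int \<lfloor>z\<rfloor>" using z0 by (simp add: bkt_def z_def)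
  have j1: "real (bkt lo w b x) \<le> z" "z < real (bkt lo w b x) + 1" using j by linarith+
  have "bkt lo w b x < b" using j1 zb by linarith
  moreover have "lo + real (bkt lo w b x) * w / real b \<le> x"
  proof -
    have "real (bkt lo w b x) * w / real b \<le> z * w / real b" using j1 assms
      by (simp add: divide_right_mono mult_right_mono)
    also have "\<dots> = x - lo" using assms by (simp add: z_def)
    finally show ?thesis by simp
  qed
  moreover have "x < lo + real (bkt lo w b x) * w / real b + w / real b"
  proof -
    have "x - lo = z * w / real b" using assms by (simp add: z_def)
    also have "\<dots> < (real (bkt lo w b x) + 1) * w / real b" using j1 assms
      by (simp add: divide_strict_right_mono)
    finally show ?thesis by (simp add: algebra_simps add_divide_distrib)
  qed
  ultimately show ?thesis by blast
qed

lemma arith_step: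
  fixes \<delta> C t u X Z :: real and n s b k :: nat
  assumes d: "0 < \<delta>" "\<delta> < 1" and C: "2 \<le> C" and t1: "1 \<le> t" and b1: "1 \<le> b"
    and bt: "real b \<le> t" "t \<le> 2 * real b" and s1: "1 \<le> s"
    and sl: "\<delta> * real n / (2 * real b) \<le> real s" and su: "real s \<le> \<delta> * real n / real b"
    and tp: "t ^ Suc (Suc k) = \<delta> * real n" and tu: "t \<le> u"
    and X: "0 \<le> X" "X \<le> real n / real s + real b"
    and Z: "Z \<le> C * real s powr (1 / real (Suc k))"
  shows "1 + X * (1 + Z / real b) \<le> (16 / \<delta>) * C * u"
proof -
  have bpos: "0 < real b" using b1 by simp
  have spos: "0 < real s" using s1 by simp
  have tpos: "0 < t" using t1 by simp
  have "real s \<le> t ^ Suc (Suc k) / real b" using su tp by simp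
  also have "\<dots> = t * t ^ Suc k / real b" by simp
  also have "\<dots> \<le> 2 * t ^ Suc k"
    using bt(2) bpos tpos by (simp add: divide_le_eq mult.commute mult_right_mono)
  also have "\<dots> \<le> (2 * t) ^ Suc k"
  proof -
    have "2 \<le> (2::real) ^ Suc k" using one_le_power[of "2::real" k] by simp
    then have "2 * t ^ Suc k \<le> 2 ^ Suc k * t ^ Suc k" using tpos by (intro mult_right_mono) auto
    then show ?thesis by (simp only: power_mult_distrib)
  qed
  finally have "(real s powr (1 / real (Suc k))) ^ Suc k \<le> (2 * t) ^ Suc k"
    using root_pow[of "real s" k] by simp
  then have sp: "real s powr (1 / real (Suc k)) \<le> 2 * t"
    by (rule power_le_imp_le_base) (use tpos in simp)
  have Z2: "Z \<le> C * (2 * t)" using Z sp C by (meson order_trans mult_left_mono order.trans zero_le_numeral dual_order.trans zero_le_numeral) 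
  have "Z / real b \<le> C * (2 * t) / real b" using Z2 bpos by (simp add: divide_right_mono)
  also have "\<dots> \<le> C * (2 * t) / (t / 2)"
    using bt(2) tpos C by (intro divide_left_mono) auto
  also have "\<dots> = 4 * C" using tpos by simp
  finally have Zb: "Z / real b \<le> 4 * C" .
  have Y: "1 + Z / real b \<le> 5 * C" using Zb C by simp
  have "real n / real s \<le> 2 * real b / \<delta>"
  proof -
    have "\<delta> * real n \<le> 2 * real b * real s" using sl bpos by (simp add: divide_le_eq mult.commute)
    then show ?thesis using spos d by (simp add: divide_le_eq le_divide_eq mult.commute)
  qed
  then have "X \<le> 2 * t / \<delta> + t / \<delta>"
  proof -
    have "2 * real b / \<delta> \<le> 2 * t / \<delta>" using bt d by (simp add: divide_right_mono)
    moreover have "real b \<le> t / \<delta>" using bt d t1 by (simp add: le_divide_eq) (smt (verit) mult_left_le mult_le_cancel_left1 tpos)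
    ultimately show ?thesis using X \<open>real n / real s \<le> 2 * real b / \<delta>\<close> by linarith
  qed
  then have X3: "X \<le> 3 * t / \<delta>" by simp
  have "X * (1 + Z / real b) \<le> (3 * t / \<delta>) * (5 * C)"
  proof (cases "0 \<le> 1 + Z / real b")
    case True
    then show ?thesis using X3 Y X(1) by (intro mult_mono) auto
  next
    case False
    then have "X * (1 + Z / real b) \<le> 0" using X(1) by (simp add: mult_nonneg_nonpos)
    also have "0 \<le> (3 * t / \<delta>) * (5 * C)" using tpos d C by simp
    finally show ?thesis .
  qed
  moreover have "1 \<le> C * t / \<delta>"
  proof -
    have "1 * 1 \<le> C * t" using C t1 by (intro mult_mono) auto
    then show ?thesis using d by (simp add: le_divide_eq)
  qed
  moreover have "(3 * t / \<delta>) * (5 * C) = 15 * (C * t / \<delta>)" by simp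
  ultimately have "1 + X * (1 + Z / real b) \<le> 16 * (C * t / \<delta>)" by linarith
  also have "\<dots> \<le> 16 * (C * u / \<delta>)" using tu C d by (simp add: divide_right_mono)
  finally show ?thesis by simp
qed

lemma nat_floor_le: "0 \<le> x \<Longrightarrow> real (nat \<lfloor>x\<rfloor>) \<le> x"
  by linarith

lemma main_ind:
  fixes \<delta> :: real
  assumes d: "0 < \<delta>" "\<delta> < 1/2"
  shows "2 * (real k - 1) * \<delta> \<le> 1 \<Longrightarrow> 1 \<le> n \<Longrightarrow> 0 < w \<Longrightarrow> length rs \<le> n \<Longrightarrow>
    set rs \<subseteq> {lo..<lo+w} \<Longrightarrow>
    places_all (alg \<delta> k n lo w) (cells \<delta> k n) rs \<and>
    sort_cost lo w (alg \<delta> k n lo w) (cells \<delta> k n) rs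
      \<le> w * (2 * (16 / \<delta>) ^ k) * real n powr (1 / (real k + 1))"
proof (induction k arbitrary: n lo w rs)
  case 0
  have "n \<le> cells \<delta> 0 n" using cells_ge d by simp
  then have h: "places_all (\<lambda>pre x. length pre) (cells \<delta> 0 n) rs \<and>
    sort_cost lo w (\<lambda>pre x. length pre) (cells \<delta> 0 n) rs \<le> w * (real (length rs) + 1)"
    using id_cost 0 by (meson order_trans)
  have "w * (real (length rs) + 1) \<le> w * (2 * real n)"
    using 0 by (intro mult_left_mono) auto
  then have "sort_cost lo w (\<lambda>pre x. length pre) (cells \<delta> 0 n) rs \<le> w * (2 * real n)"
    using h by linarith
  then show ?case using h by (simp add: mult.assoc)
next
  case (Suc k)
  let ?C = "2 * (16 / \<delta>) ^ k"
  let ?u = "real n powr (1 / (real (Suc k) + 1))"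
  have n1: "1 \<le> real n" using Suc by simp
  have u1: "1 \<le> ?u" using n1 by (intro ge_one_powr_ge_zero) auto
  have C2: "2 \<le> ?C" using d by simp
  have C16: "2 * (16 / \<delta>) ^ Suc k = (16 / \<delta>) * ?C" by simp
  show ?case
  proof (cases "\<delta> * real n < 1")
    case True
    have "n \<le> cells \<delta> (Suc k) n" using cells_ge d by simp
    then have h: "places_all (\<lambda>pre x. length pre) (cells \<delta> (Suc k) n) rs \<and>
      sort_cost lo w (\<lambda>pre x. length pre) (cells \<delta> (Suc k) n) rs \<le> w * (real (length rs) + 1)"
      using id_cost Suc.prems by (meson order_trans)
    have "real (length rs) + 1 \<le> 2 / \<delta>"
    proof -
      have "real (length rs) \<le> real n" using Suc.prems by simp
      also have "real n < 1 / \<delta>" using True d by (simp add: field_simps)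
      finally show ?thesis using d by (simp add: field_simps)
    qed
    also have "2 / \<delta> \<le> 2 * (16 / \<delta>) ^ Suc k"
    proof -
      have "1 \<le> 16 / \<delta>" using d by simp
      then have "16 / \<delta> \<le> (16 / \<delta>) ^ Suc k" by (metis power_increasing le_add1 plus_1_eq_Suc power_one_right)
      moreover have "1 / \<delta> \<le> 16 / \<delta>" using d by (simp add: divide_right_mono)
      ultimately show ?thesis by simp
    qed
    also have "\<dots> \<le> 2 * (16 / \<delta>) ^ Suc k * ?u"
    proof -
      have "2 * (16 / \<delta>) ^ Suc k * 1 \<le> 2 * (16 / \<delta>) ^ Suc k * ?u"
        using u1 d by (intro mult_left_mono) auto
      then show ?thesis by simp
    qed
    finally have "w * (real (length rs) + 1) \<le> w * (2 * (16 / \<delta>) ^ Suc k * ?u)"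
      using Suc.prems by (intro mult_left_mono) auto
    then show ?thesis using h True by (simp add: mult.assoc)
  next
    case False
    then have dn: "1 \<le> \<delta> * real n" by simp
    define t where "t = (\<delta> * real n) powr (1 / real (Suc (Suc k)))"
    define b where "b = bpar \<delta> k n"
    define s where "s = spar \<delta> k n"
    define S where "S = cells \<delta> k s"
    define f where "f = bkt lo w b"
    define G where "G = gidf f s"
    define B where "B = (\<lambda>x. alg \<delta> k s (lo + real (f x) * w / real b) (w / real b))"
    define M where "M = cells \<delta> (Suc k) n"
    have A: "alg \<delta> (Suc k) n lo w = compo G S B"
      using False unfolding G_def S_def B_def f_def b_def s_def by simp
    have t1: "1 \<le> t" unfolding t_def using dn by (intro ge_one_powr_ge_zero) auto
    have tp: "t ^ Suc (Suc k) = \<delta> * real n" unfolding t_def using root_pow[of "\<delta> * real n" "Suc k"] dn by simp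
    have tdn: "t \<le> \<delta> * real n"
    proof -
      have "t \<le> (\<delta> * real n) powr 1" unfolding t_def using dn by (intro powr_mono) auto
      then show ?thesis using dn by simp
    qed
    have tu: "t \<le> ?u"
    proof -
      have "t \<le> real n powr (1 / real (Suc (Suc k)))" unfolding t_def
        using d n1 by (intro powr_mono2) auto
      then show ?thesis by (simp add: add.commute)
    qed
    have bfl: "real b = of_int \<lfloor>t\<rfloor>" unfolding b_def bpar_def t_def[symmetric] using t1 by simp
    have b1: "1 \<le> b" using bfl t1 by linarith
    have bt: "real b \<le> t" "t \<le> 2 * real b" using bfl t1 b1 floor_correct[of t] by linarith+
    have bpos: "0 < real b" using b1 by simp
    define v where "v = \<delta> * real n / real b"
    have v1: "1 \<le> v" unfolding v_def using bt tdn bpos by (simp add: le_divide_eq)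
    have sfl: "real s = of_int \<lfloor>v\<rfloor>" unfolding s_def spar_def v_def[symmetric] b_def[symmetric] using v1 by simp
    have s1: "1 \<le> s" using sfl v1 by linarith
    have su: "real s \<le> \<delta> * real n / real b" using sfl v_def by linarith
    have sl: "\<delta> * real n / (2 * real b) \<le> real s"
    proof -
      have fl1: "1 \<le> real_of_int \<lfloor>v\<rfloor>" using v1 by simp
      have "v < real_of_int \<lfloor>v\<rfloor> + 1" using floor_correct[of v] by (simp only: of_int_add of_int_1)
      then have "v / 2 \<le> of_int \<lfloor>v\<rfloor>" using fl1 by linarith
      moreover have "\<delta> * real n / (2 * real b) = v / 2" by (simp add: v_def)
      ultimately show ?thesis using sfl by simp
    qed
    have bs: "real b * real s \<le> \<delta> * real n" using su bpos by (simp add: le_divide_eq mult.commute)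
    have Ss: "s \<le> S" unfolding S_def using cells_ge d by simp
    have S0: "0 < S" using Ss s1 by simp
    have Sr: "real S \<le> (1 + 2 * real k * \<delta>) * real s" unfolding S_def cells_def
      using d by (intro nat_floor_le) simp
    have kd: "2 * real k * \<delta> \<le> 1" using Suc.prems(1) by simp
    define len where "len = length rs"
    have inI: "rs ! i \<in> {lo..<lo+w}" if "i < len" for i using Suc.prems(5) that nth_mem unfolding len_def by blast
    have fI: "f (rs!i) < b \<and> lo + real (f (rs!i)) * w / real b \<le> rs!i \<and>
       rs!i < lo + real (f (rs!i)) * w / real b + w / real b" if "i < len" for i
      unfolding f_def using bkt_props[OF inI[OF that] Suc.prems(3)] b1 by simp
    have fb: "\<forall>y\<in>set rs. f y < b"
      using fI unfolding len_def by (metis in_set_conv_nth)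
    define rep where "rep = (\<lambda>\<gamma>. SOME i. i < len \<and> G rs i = \<gamma>)"
    have rep: "rep (G rs i) < len \<and> G rs (rep (G rs i)) = G rs i" if "i < len" for i
      unfolding rep_def by (rule someI[of _ i]) (use that in simp)
    have repf: "f (rs ! rep (G rs i)) = f (rs ! i)" if "i < len" for i
    proof -
      have "keyf f s rs (rep (G rs i)) = keyf f s rs i"
        using rep[OF that] gidf_key_eq unfolding G_def by metis
      then show ?thesis by (simp add: keyf_def)
    qed
    define l where "l = (\<lambda>\<gamma>. lo + real (f (rs ! rep \<gamma>)) * w / real b)"
    define BB where "BB = (\<lambda>\<gamma>. alg \<delta> k s (l \<gamma>) (w / real b))"
    define P where "P = (\<lambda>\<gamma>. filter (\<lambda>i. G rs i = \<gamma>) [0..<len])"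
    define sub where "sub = (\<lambda>\<gamma>. map (nth rs) (P \<gamma>))"
    have BBi: "B (rs!i) = BB (G rs i)" if "i < len" for i
      unfolding B_def BB_def l_def using repf[OF that] by simp
    have IH: "places_all (BB \<gamma>) S (sub \<gamma>) \<and>
        sort_cost (l \<gamma>) (w / real b) (BB \<gamma>) S (sub \<gamma>) \<le> (w / real b) * ?C * real s powr (1 / (real k + 1))"
      if g: "\<gamma> \<in> G rs ` {..<len}" for \<gamma>
    proof -
      obtain i0 where i0: "i0 < len" "\<gamma> = G rs i0" using g by auto
      have len_sub: "length (sub \<gamma>) \<le> s"
      proof -
        have "length (sub \<gamma>) = card {i. i < len \<and> G rs i = \<gamma>}"
          unfolding sub_def P_def by (simp add: length_filter_conv_card cong: conj_cong)
        also have "\<dots> \<le> s" unfolding G_def len_def using block_size s1 by simp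
        finally show ?thesis .
      qed
      have set_sub: "set (sub \<gamma>) \<subseteq> {l \<gamma>..<l \<gamma> + w / real b}"
      proof
        fix y assume "y \<in> set (sub \<gamma>)"
        then obtain i where i: "i < len" "G rs i = \<gamma>" "y = rs ! i"
          unfolding sub_def P_def by auto
        have "l \<gamma> = lo + real (f (rs!i)) * w / real b"
          unfolding l_def using repf[OF i(1)] i(2) by simp
        then show "y \<in> {l \<gamma>..<l \<gamma> + w / real b}" using fI[OF i(1)] i(3) by simp
      qed
      have "2 * (real k - 1) * \<delta> \<le> 2 * real k * \<delta>" using d by (intro mult_right_mono) auto
      then have "2 * (real k - 1) * \<delta> \<le> 1" using kd by linarith
      moreover have "0 < w / real b" using Suc.prems bpos by simp
      ultimately show ?thesis
        using Suc.IH[of s "w / real b" "sub \<gamma>" "l \<gamma>"] s1 len_sub set_sub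
        unfolding BB_def S_def by simp
    qed
    have stab: "\<forall>i<len. \<forall>i'\<le>i. G (take (Suc i) rs) i' = G rs i'"
      unfolding G_def using gidf_stab by blast
    have keys: "real (card (keyf f s rs ` {..<len})) \<le> real n / real s + real b"
    proof -
      have "real (card (keyf f s rs ` {..<len})) \<le> real len / real s + real b"
        using card_keys[of s rs f b] s1 fb unfolding len_def by simp
      also have "\<dots> \<le> real n / real s + real b"
        using Suc.prems(4) s1 unfolding len_def by (simp add: divide_right_mono)
      finally show ?thesis .
    qed
    have bd: "\<forall>i<len. (G rs i + 1) * S \<le> M"
    proof (intro allI impI)
      fix i assume i: "i < len"
      have "G rs i < card (keyf f s rs ` {..<len})" unfolding G_def by (rule gidf_lt[OF i])
      then have "real (G rs i + 1) \<le> real n / real s + real b" using keys by linarith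
      then have "real ((G rs i + 1) * S) \<le> (real n / real s + real b) * ((1 + 2 * real k * \<delta>) * real s)"
        using Sr by (simp only: of_nat_mult) (intro mult_mono, auto)
      also have "\<dots> = (1 + 2 * real k * \<delta>) * (real n + real b * real s)"
        using s1 by (simp add: field_simps)
      also have "\<dots> \<le> (1 + 2 * real k * \<delta>) * real n + 2 * (\<delta> * real n)"
      proof -
        have "(1 + 2 * real k * \<delta>) * (real b * real s) \<le> 2 * (\<delta> * real n)"
        proof -
          have "(1 + 2 * real k * \<delta>) * (real b * real s) \<le> 2 * (real b * real s)"
            using kd by (intro mult_right_mono) auto
          then show ?thesis using bs by linarith
        qed
        then show ?thesis by (simp add: algebra_simps)
      qed
      also have "\<dots> = (1 + 2 * real (Suc k) * \<delta>) * real n" by (simp add: algebra_simps)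
      finally have "real ((G rs i + 1) * S) \<le> (1 + 2 * real (Suc k) * \<delta>) * real n" .
      then show "(G rs i + 1) * S \<le> M" unfolding M_def cells_def by linarith
    qed
    have cm: "places_all (compo G S B) M rs \<and>
      array_order (compo G S B) M rs
        = concat (map (\<lambda>\<gamma>. array_order (BB \<gamma>) S (sub \<gamma>)) (sorted_list_of_set (G rs ` {..<len})))"
      unfolding sub_def P_def len_def
      by (rule comp_main) (use stab S0 BBi IH bd in \<open>auto simp: len_def sub_def P_def\<close>)
    define \<Gamma>s where "\<Gamma>s = sorted_list_of_set (G rs ` {..<len})"
    define arr where "arr = (\<lambda>\<gamma>. array_order (BB \<gamma>) S (sub \<gamma>))"
    define Z where "Z = ?C * real s powr (1 / (real k + 1))"
    have setG: "set \<Gamma>s = G rs ` {..<len}" unfolding \<Gamma>s_def by simp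
    have lrange: "l \<gamma> \<in> {lo..lo+w} \<and> l \<gamma> + w / real b \<in> {lo..lo+w}" if g: "\<gamma> \<in> set \<Gamma>s" for \<gamma>
    proof -
      obtain i0 where i0: "i0 < len" "\<gamma> = G rs i0" using g setG by auto
      have j: "f (rs ! rep \<gamma>) < b" using fI rep i0 by blast
      have "real (f (rs ! rep \<gamma>)) + 1 \<le> real b" using j by linarith
      then have "(real (f (rs ! rep \<gamma>)) + 1) * (w / real b) \<le> real b * (w / real b)"
        using Suc.prems(3) bpos by (intro mult_right_mono) auto
      then have "real (f (rs ! rep \<gamma>)) * w / real b + w / real b \<le> w"
        using bpos by (simp add: algebra_simps)
      moreover have "0 \<le> real (f (rs ! rep \<gamma>)) * w / real b" using Suc.prems(3) bpos by simp
      moreover have "0 \<le> w / real b" using Suc.prems(3) bpos by simp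
      ultimately show ?thesis unfolding l_def by auto
    qed
    have "sort_cost lo w (alg \<delta> (Suc k) n lo w) (cells \<delta> (Suc k) n) rs
        = path_cost (lo # concat (map arr \<Gamma>s) @ [lo + w])"
      unfolding sort_cost_def A M_def[symmetric] using cm unfolding arr_def \<Gamma>s_def by simp
    also have "\<dots> \<le> ((lo + w) - lo) + (\<Sum>\<gamma>\<leftarrow>\<Gamma>s. ((lo + w) - lo) + path_cost (l \<gamma> # arr \<gamma> @ [l \<gamma> + w / real b]))"
      by (rule pc_concat) (use lrange Suc.prems(3) in auto)
    also have "(\<Sum>\<gamma>\<leftarrow>\<Gamma>s. ((lo + w) - lo) + path_cost (l \<gamma> # arr \<gamma> @ [l \<gamma> + w / real b]))
        \<le> (\<Sum>\<gamma>\<leftarrow>\<Gamma>s. w + (w / real b) * Z)"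
    proof (rule sum_list_mono)
      fix \<gamma> assume "\<gamma> \<in> set \<Gamma>s"
      then have "\<gamma> \<in> G rs ` {..<len}" using setG by simp
      then show "((lo + w) - lo) + path_cost (l \<gamma> # arr \<gamma> @ [l \<gamma> + w / real b]) \<le> w + (w / real b) * Z"
        using IH[of \<gamma>] unfolding arr_def sort_cost_def Z_def by (simp add: mult.assoc)
    qed
    also have "(\<Sum>\<gamma>\<leftarrow>\<Gamma>s. w + (w / real b) * Z) = real (card (G rs ` {..<len})) * (w + (w / real b) * Z)"
      unfolding \<Gamma>s_def by (simp add: sum_list_triv)
    finally have c1: "sort_cost lo w (alg \<delta> (Suc k) n lo w) (cells \<delta> (Suc k) n) rs
        \<le> w + real (card (G rs ` {..<len})) * (w + (w / real b) * Z)" by simp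
    define X where "X = real (card (G rs ` {..<len}))"
    have X: "0 \<le> X" "X \<le> real n / real s + real b"
    proof -
      show "0 \<le> X" unfolding X_def by simp
      have "card (G rs ` {..<len}) \<le> card (keyf f s rs ` {..<len})"
        unfolding G_def by (rule gidf_image_card)
      then show "X \<le> real n / real s + real b" using keys unfolding X_def by linarith
    qed
    have Zeq: "Z = ?C * real s powr (1 / real (Suc k))"
      unfolding Z_def by (simp add: add.commute[of "real k" 1])
    have "w + X * (w + (w / real b) * Z) = w * (1 + X * (1 + Z / real b))"
      using bpos by (simp add: algebra_simps)
    also have "\<dots> \<le> w * ((16 / \<delta>) * ?C * ?u)"
    proof (rule mult_left_mono)
      show "1 + X * (1 + Z / real b) \<le> (16 / \<delta>) * ?C * ?u"
      proof -
        have d1: "\<delta> < 1" using d by simp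
        have ZZ: "Z \<le> ?C * real s powr (1 / real (Suc k))" using Zeq by (rule eq_refl)
        show ?thesis by (rule arith_step[OF d(1) d1 C2 t1 b1 bt(1) bt(2) s1 sl su tp tu X(1) X(2) ZZ])
      qed
      show "0 \<le> w" using Suc.prems by simp
    qed
    finally show ?thesis using c1 cm A C16 unfolding X_def M_def by (simp add: mult.assoc)
  qed
qed

lemma const_bound:
  fixes \<delta> :: real and k :: nat
  assumes "0 < \<delta>" "\<delta> < 1/2"
  shows "2 * (16 / \<delta>) ^ k \<le> \<delta> powr (- 5 * (real k + 1))"
proof -
  define y where "y = 1 / \<delta>"
  have y2: "2 \<le> y" using assms by (simp add: y_def field_simps)
  have "(2::real) ^ 4 \<le> y ^ 4" using y2 by (intro power_mono) auto
  then have y16: "16 \<le> y ^ 4" by simp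
  have e: "\<delta> powr (- 5 * (real k + 1)) = y ^ (5 * k + 5)"
  proof -
    have "\<delta> powr (- 5 * (real k + 1)) = \<delta> powr (- (5 * (real k + 1)))" by simp
    also have "\<dots> = 1 / \<delta> powr (5 * (real k + 1))" by (rule powr_minus_divide)
    also have "\<dots> = (1 / \<delta>) powr (5 * (real k + 1))" using assms by (simp add: powr_divide)
    finally have "\<delta> powr (- 5 * (real k + 1)) = (1 / \<delta>) powr (5 * (real k + 1))" .
    also have "\<dots> = y powr real (5 * k + 5)" by (simp add: y_def algebra_simps)
    also have "\<dots> = y ^ (5 * k + 5)" using y2 by (intro powr_realpow) simp
    finally show ?thesis .
  qed
  have "16 / \<delta> = 16 * y" by (simp add: y_def)
  also have "\<dots> \<le> y ^ 4 * y" using y16 y2 by (intro mult_right_mono) auto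
  finally have "16 / \<delta> \<le> y ^ 5" by (simp add: power_Suc2 [symmetric] del: power_Suc)
  then have "(16 / \<delta>) ^ k \<le> (y ^ 5) ^ k" using assms by (intro power_mono) auto
  then have "2 * (16 / \<delta>) ^ k \<le> y * (y ^ 5) ^ k" using y2 assms by (intro mult_mono) auto
  also have "\<dots> = y ^ (5 * k + 1)" by (simp add: power_mult power_add)
  also have "\<dots> \<le> y ^ (5 * k + 5)" using y2 by (intro power_increasing) auto
  finally show ?thesis using e by simp
qed

theorem lemma11:
  "\<exists>K::real. K > 0 \<and>
    (\<forall>(\<delta>::real) (\<alpha>::real) (\<beta>::real) (k::nat) (n::nat).
       0 < \<delta> \<longrightarrow> \<delta> < 1/2 \<longrightarrow> 0 \<le> \<alpha> \<longrightarrow> 0 < \<beta> \<longrightarrow> \<alpha> + \<beta> \<le> 1 \<longrightarrow>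
       1 \<le> k \<longrightarrow> real k \<le> 1 / (2 * \<delta>) + 1 \<longrightarrow> 1 \<le> n \<longrightarrow>
       (\<exists>A::online_alg.
          \<forall>rs. length rs = n \<longrightarrow> set rs \<subseteq> {\<alpha>..<\<alpha> + \<beta>} \<longrightarrow>
            (let m = nat \<lfloor>(1 + 2 * real k * \<delta>) * real n\<rfloor> in
               places_all A m rs \<and>
               sort_cost \<alpha> \<beta> A m rs
                 \<le> \<beta> * real n powr (1 / (real k + 1)) * \<delta> powr (- K * (real k + 1)))))"
proof (intro exI[of _ 5] conjI allI impI)
  show "(0::real) < 5" by simp
  fix \<delta> \<alpha> \<beta> :: real and k n :: nat
  assume d0: "0 < \<delta>" and d1: "\<delta> < 1/2" and "0 \<le> \<alpha>" and b0: "0 < \<beta>" and "\<alpha> + \<beta> \<le> 1"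
    and "1 \<le> k" and kb: "real k \<le> 1 / (2 * \<delta>) + 1" and n1: "1 \<le> n"
  have kd: "2 * (real k - 1) * \<delta> \<le> 1"
  proof -
    have "real k - 1 \<le> 1 / (2 * \<delta>)" using kb by simp
    then have "2 * \<delta> * (real k - 1) \<le> 1" using d0 by (simp add: le_divide_eq mult.commute)
    then show ?thesis by (simp add: algebra_simps)
  qed
  show "\<exists>A::online_alg.
          \<forall>rs. length rs = n \<longrightarrow> set rs \<subseteq> {\<alpha>..<\<alpha> + \<beta>} \<longrightarrow>
            (let m = nat \<lfloor>(1 + 2 * real k * \<delta>) * real n\<rfloor> in
               places_all A m rs \<and>
               sort_cost \<alpha> \<beta> A m rs
                 \<le> \<beta> * real n powr (1 / (real k + 1)) * \<delta> powr (- 5 * (real k + 1)))"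
  proof (intro exI[of _ "alg \<delta> k n \<alpha> \<beta>"] allI impI)
    fix rs :: "real list" assume l: "length rs = n" and sr: "set rs \<subseteq> {\<alpha>..<\<alpha> + \<beta>}"
    have h: "places_all (alg \<delta> k n \<alpha> \<beta>) (cells \<delta> k n) rs \<and>
      sort_cost \<alpha> \<beta> (alg \<delta> k n \<alpha> \<beta>) (cells \<delta> k n) rs
        \<le> \<beta> * (2 * (16 / \<delta>) ^ k) * real n powr (1 / (real k + 1))"
      using main_ind[OF d0 d1 kd n1 b0 _ sr] l by simp
    have "\<beta> * (2 * (16 / \<delta>) ^ k) * real n powr (1 / (real k + 1))
        \<le> \<beta> * \<delta> powr (- 5 * (real k + 1)) * real n powr (1 / (real k + 1))"
      using const_bound[OF d0 d1, of k] b0 by (intro mult_right_mono mult_left_mono) auto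
    then show "let m = nat \<lfloor>(1 + 2 * real k * \<delta>) * real n\<rfloor> in
               places_all (alg \<delta> k n \<alpha> \<beta>) m rs \<and>
               sort_cost \<alpha> \<beta> (alg \<delta> k n \<alpha> \<beta>) m rs
                 \<le> \<beta> * real n powr (1 / (real k + 1)) * \<delta> powr (- 5 * (real k + 1))"
      using h unfolding cells_def Let_def by (simp add: mult_ac)
  qed
qed

end
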